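(* Let $n\ge 1$ and let $H$ be a maximal subgroup of the semigroup $M_n(\mathbb{FT})$. Then $H$ is isomorphic (as a group) to a direct product $\mathbb{R}\times\Sigma$ for some subgroup $\Sigma$ of the symmetric group $S_n$ (here $\mathbb{R}$ denotes the additive group of real numbers).
   Context: $\mathbb{FT}$ denotes the set $\mathbb{R}$ with operations $a\oplus b=\max(a,b)$ and $a\otimes b=a+b$. $M_n(\mathbb{FT})$ is the set of $n\times n$ matrices with real entries, which is a semigroup under tropical matrix multiplication $(A\otimes B)_{i,j}=\max_{k}(A_{i,k}+B_{k,j})$. A maximal subgroup of a semigroup is a subgroup (a subset which is a group under the semigroup operation, possibly with identity different from any identity of the semigroup) not properly contained in any other subgroup. *)

theory Defs
  imports Complex_Main "HOL-Algebra.Group" "HOL-Algebra.Bij"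
begin

text \<open>n x n tropical matrices over FT, indexed by a finite type 'n (so n = CARD('n) \<ge> 1).\<close>
type_synonym 'n tmat = "'n \<Rightarrow> 'n \<Rightarrow> real"

definition tmult :: "('n::finite) tmat \<Rightarrow> 'n tmat \<Rightarrow> 'n tmat" where
  "tmult A B = (\<lambda>i j. Max (range (\<lambda>k. A i k + B k j)))"

definition sg_subgroup :: "('a \<Rightarrow> 'a \<Rightarrow> 'a) \<Rightarrow> 'a set \<Rightarrow> bool" where
  "sg_subgroup f H \<longleftrightarrow>
     (\<forall>x\<in>H. \<forall>y\<in>H. f x y \<in> H) \<and>
     (\<exists>e\<in>H. (\<forall>x\<in>H. f e x = x \<and> f x e = x) \<and>
             (\<forall>x\<in>H. \<exists>y\<in>H. f x y = e \<and> f y x = e))"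

definition sg_maximal_subgroup :: "('a \<Rightarrow> 'a \<Rightarrow> 'a) \<Rightarrow> 'a set \<Rightarrow> bool" where
  "sg_maximal_subgroup f H \<longleftrightarrow>
     sg_subgroup f H \<and> (\<forall>K. sg_subgroup f K \<and> H \<subseteq> K \<longrightarrow> K = H)"

definition sg_group :: "('a \<Rightarrow> 'a \<Rightarrow> 'a) \<Rightarrow> 'a set \<Rightarrow> 'a monoid" where
  "sg_group f H = \<lparr>carrier = H, mult = f,
     one = (THE e. e \<in> H \<and> (\<forall>x\<in>H. f e x = x \<and> f x e = x))\<rparr>"

definition real_add_group :: "real monoid" where
  "real_add_group = \<lparr>carrier = UNIV, mult = (+), one = 0\<rparr>"

end

theory Submission
  imports Defs
begin

definition mv :: "('n::finite) tmat \<Rightarrow> ('n \<Rightarrow> real) \<Rightarrow> ('n \<Rightarrow> real)" where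
  "mv A v = (\<lambda>i. Max (range (\<lambda>k. A i k + v k)))"
definition col :: "('n::finite) tmat \<Rightarrow> 'n \<Rightarrow> ('n \<Rightarrow> real)" where
  "col A j = (\<lambda>i. A i j)"
definition shv :: "real \<Rightarrow> ('n \<Rightarrow> real) \<Rightarrow> ('n \<Rightarrow> real)" where
  "shv c v = (\<lambda>i. c + v i)"
definition shm :: "real \<Rightarrow> ('n::finite) tmat \<Rightarrow> 'n tmat" where
  "shm c A = (\<lambda>i j. c + A i j)"
definition mu :: "('n::finite) tmat \<Rightarrow> 'n \<Rightarrow> ('n \<Rightarrow> real) \<Rightarrow> real" where
  "mu E h v = Min (range (\<lambda>i. v i - E i h))"
definition rep :: "('n::finite) tmat \<Rightarrow> 'n set \<Rightarrow> ('n \<Rightarrow> real) \<Rightarrow> bool" where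
  "rep E S v \<longleftrightarrow> (\<forall>i. \<exists>h\<in>S. v i \<le> mu E h v + E i h)"
definition Gen :: "('n::finite) tmat \<Rightarrow> 'n set \<Rightarrow> bool" where
  "Gen E S \<longleftrightarrow> (\<forall>k. rep E S (col E k))"
definition inC :: "('n::finite) tmat \<Rightarrow> ('n \<Rightarrow> real) \<Rightarrow> bool" where
  "inC E v \<longleftrightarrow> mv E v = v"
definition vmax :: "('n \<Rightarrow> real) \<Rightarrow> ('n \<Rightarrow> real) \<Rightarrow> ('n \<Rightarrow> real)" where
  "vmax u w = (\<lambda>i. max (u i) (w i))"
definition ext :: "('n::finite) tmat \<Rightarrow> ('n \<Rightarrow> real) \<Rightarrow> bool" where
  "ext E v \<longleftrightarrow> inC E v \<and> (\<forall>u w. inC E u \<longrightarrow> inC E w \<longrightarrow> v = vmax u w \<longrightarrow> v = u \<or> v = w)"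

lemma mv_ge: "A i k + v k \<le> mv A v i"
  unfolding mv_def by (rule Max_ge) auto

lemma mv_ex: "\<exists>k. mv A v i = A i k + v k"
proof -
  have "Max (range (\<lambda>k. A i k + v k)) \<in> range (\<lambda>k. A i k + v k)"
    by (rule Max_in) auto
  then obtain k where "Max (range (\<lambda>k. A i k + v k)) = A i k + v k" by blast
  then show ?thesis unfolding mv_def by blast
qed

lemma mv_eqI:
  assumes "\<And>k. A i k + v k \<le> x" and "\<exists>k. x \<le> A i k + v k"
  shows "mv A v i = x"
proof -
  obtain k where "mv A v i = A i k + v k" using mv_ex by blast
  moreover obtain k' where "x \<le> A i k' + v k'" using assms(2) by blast
  ultimately show ?thesis using assms(1)[of k] mv_ge[of A i k' v] by linarith
qed

lemma tmult_mv: "tmult A B i j = mv A (col B j) i"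
  unfolding tmult_def mv_def col_def by simp

lemma mv_assoc: "mv (tmult A B) v = mv A (mv B v)"
proof
  fix i
  show "mv (tmult A B) v i = mv A (mv B v) i"
  proof (rule mv_eqI)
    fix k
    obtain l where l: "tmult A B i k = A i l + B l k"
      using mv_ex[of A "col B k" i] by (auto simp: tmult_mv col_def)
    show "tmult A B i k + v k \<le> mv A (mv B v) i"
      using l mv_ge[of B l k v] mv_ge[of A i l "mv B v"] by linarith
  next
    obtain l where l: "mv A (mv B v) i = A i l + mv B v l" using mv_ex by blast
    obtain k where k: "mv B v l = B l k + v k" using mv_ex by blast
    have "A i l + B l k \<le> tmult A B i k"
      using mv_ge[of A i l "col B k"] by (simp add: tmult_mv col_def)
    then show "\<exists>k. mv A (mv B v) i \<le> tmult A B i k + v k" using l k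
      by (intro exI[of _ k]) linarith
  qed
qed

lemma col_tmult: "col (tmult A B) j = mv A (col B j)"
  by (auto simp: col_def tmult_mv)

lemma tmult_assoc: "tmult (tmult A B) C = tmult A (tmult B C)"
  by (intro ext) (simp add: tmult_mv mv_assoc col_tmult)

lemma mv_mono: "(\<And>k. u k \<le> w k) \<Longrightarrow> mv A u i \<le> mv A w i"
  using mv_ex[of A u i] mv_ge[of A i _ w] by (metis add_left_mono order_trans)

lemma mv_shv: "mv A (shv c v) = shv c (mv A v)"
proof
  fix i
  show "mv A (shv c v) i = shv c (mv A v) i"
    unfolding shv_def
  proof (rule mv_eqI)
    fix k show "A i k + (c + v k) \<le> c + mv A v i" using mv_ge[of A i k v] by linarith
  next
    obtain k where "mv A v i = A i k + v k" using mv_ex by blast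
    then show "\<exists>k. c + mv A v i \<le> A i k + (c + v k)" by (intro exI[of _ k]) linarith
  qed
qed

lemma mv_shm: "mv (shm c A) v = shv c (mv A v)"
proof
  fix i
  show "mv (shm c A) v i = shv c (mv A v) i"
    unfolding shv_def
  proof (rule mv_eqI)
    fix k show "shm c A i k + v k \<le> c + mv A v i" using mv_ge[of A i k v] by (simp add: shm_def)
  next
    obtain k where "mv A v i = A i k + v k" using mv_ex by blast
    then show "\<exists>k. c + mv A v i \<le> shm c A i k + v k" by (intro exI[of _ k]) (simp add: shm_def)
  qed
qed

lemma tmult_shm_left: "tmult (shm c A) B = shm c (tmult A B)"
proof (intro ext)
  fix i j
  have "tmult (shm c A) B i j = shv c (mv A (col B j)) i" by (simp only: tmult_mv mv_shm)
  then show "tmult (shm c A) B i j = shm c (tmult A B) i j" by (simp add: shv_def shm_def tmult_mv)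
qed

lemma col_shm: "col (shm c B) j = shv c (col B j)"
  by (simp add: col_def shm_def shv_def)

lemma tmult_shm_right: "tmult A (shm c B) = shm c (tmult A B)"
proof (intro ext)
  fix i j
  have "tmult A (shm c B) i j = shv c (mv A (col B j)) i" by (simp only: tmult_mv col_shm mv_shv)
  then show "tmult A (shm c B) i j = shm c (tmult A B) i j" by (simp add: shv_def shm_def tmult_mv)
qed

lemma shm_shm: "shm c (shm d A) = shm (c + d) A"
  by (simp add: shm_def add.assoc)

lemma shm_0: "shm 0 A = A"
  by (simp add: shm_def)

lemma mv_vmax: "mv A (vmax u w) = vmax (mv A u) (mv A w)"
proof
  fix i
  show "mv A (vmax u w) i = vmax (mv A u) (mv A w) i"
    unfolding vmax_def
  proof (rule mv_eqI)
    fix k show "A i k + max (u k) (w k) \<le> max (mv A u i) (mv A w i)"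
      using mv_ge[of A i k u] mv_ge[of A i k w] by linarith
  next
    obtain k where k: "mv A u i = A i k + u k" using mv_ex by blast
    obtain k' where k': "mv A w i = A i k' + w k'" using mv_ex by blast
    show "\<exists>k. max (mv A u i) (mv A w i) \<le> A i k + max (u k) (w k)"
    proof (cases "mv A u i \<le> mv A w i")
      case True then show ?thesis using k' by (intro exI[of _ k']) linarith
    next
      case False then show ?thesis using k by (intro exI[of _ k]) linarith
    qed
  qed
qed

lemma mu_le: "mu E h v + E i h \<le> v i"
proof -
  have "mu E h v \<le> v i - E i h" unfolding mu_def by (rule Min_le) auto
  then show ?thesis by linarith
qed

lemma mu_greatest: "(\<And>i. c + E i h \<le> v i) \<Longrightarrow> c \<le> mu E h v"
  unfolding mu_def by (rule Min.boundedI) (auto simp: algebra_simps)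

lemma mu_mono: "(\<And>i. u i \<le> v i) \<Longrightarrow> mu E h u \<le> mu E h v"
  by (rule mu_greatest) (meson mu_le order_trans)

lemma rep_trans:
  assumes "rep E S v" "\<And>h. h \<in> S \<Longrightarrow> rep E T (col E h)"
  shows "rep E T v"
  unfolding rep_def
proof
  fix i
  obtain h where h: "h \<in> S" "v i \<le> mu E h v + E i h" using assms(1) unfolding rep_def by blast
  obtain h' where h': "h' \<in> T" "E i h \<le> mu E h' (col E h) + E i h'"
    using assms(2)[OF h(1)] unfolding rep_def col_def by blast
  have "mu E h v + mu E h' (col E h) \<le> mu E h' v"
  proof (rule mu_greatest)
    fix i'
    show "mu E h v + mu E h' (col E h) + E i' h' \<le> v i'"
      using mu_le[of E h' "col E h" i'] mu_le[of E h v i'] unfolding col_def by linarith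
  qed
  then have "v i \<le> mu E h' v + E i h'" using h h' by linarith
  then show "\<exists>h\<in>T. v i \<le> mu E h v + E i h" using h'(1) by blast
qed


lemma mv_col_idem: "tmult E E = E \<Longrightarrow> mv E (col E j) = col E j"
  by (metis col_tmult)

lemma inC_col: "tmult E E = E \<Longrightarrow> inC E (col E j)"
  by (simp add: inC_def mv_col_idem)

lemma inC_shv: "inC E v \<Longrightarrow> inC E (shv c v)"
  by (simp add: inC_def mv_shv)

lemma inC_vmax: "inC E u \<Longrightarrow> inC E w \<Longrightarrow> inC E (vmax u w)"
  by (simp add: inC_def mv_vmax)

lemma inC_le: "inC E v \<Longrightarrow> E i k + v k \<le> v i"
  by (metis inC_def mv_ge)

lemma inC_ex: "inC E v \<Longrightarrow> \<exists>k. v i = E i k + v k"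
  by (metis inC_def mv_ex)

lemma rep_self: "h \<in> T \<Longrightarrow> rep E T (col E h)"
proof -
  assume h: "h \<in> T"
  have "0 \<le> mu E h (col E h)" by (rule mu_greatest) (simp add: col_def)
  then have "col E h i \<le> mu E h (col E h) + E i h" for i by (simp add: col_def)
  then show ?thesis unfolding rep_def using h by blast
qed

lemma Gen_UNIV: assumes idem: "tmult E E = E" shows "Gen E UNIV"
  unfolding Gen_def rep_def
proof (intro allI)
  fix k i
  obtain j where j: "mv E (col E k) i = E i j + col E k j" using mv_ex by blast
  have "E j k \<le> mu E j (col E k)"
  proof (rule mu_greatest)
    fix i' show "E j k + E i' j \<le> col E k i'"
      using mv_ge[of E i' j "col E k"] mv_col_idem[OF idem, of k] by (simp add: col_def)
  qed
  moreover have "col E k i = E i j + E j k" using j mv_col_idem[OF idem, of k] by (simp add: col_def)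
  ultimately show "\<exists>h\<in>UNIV. col E k i \<le> mu E h (col E k) + E i h" by (intro bexI[of _ j]) auto
qed

lemma rep_inC:
  assumes gen: "Gen E S" and v: "inC E v"
  shows "rep E S v"
  unfolding rep_def
proof
  fix i
  obtain k where k: "v i = E i k + v k" using inC_ex[OF v] by blast
  obtain h where h: "h \<in> S" "col E k i \<le> mu E h (col E k) + E i h"
    using gen unfolding Gen_def rep_def by blast
  have "mu E h (col E k) + v k \<le> mu E h v"
  proof (rule mu_greatest)
    fix i' show "mu E h (col E k) + v k + E i' h \<le> v i'"
      using mu_le[of E h "col E k" i'] inC_le[OF v, of i' k] by (simp add: col_def)
  qed
  then have "v i \<le> mu E h v + E i h" using h k by (simp add: col_def)
  then show "\<exists>h\<in>S. v i \<le> mu E h v + E i h" using h(1) by blast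
qed

lemma ext_split:
  assumes idem: "tmult E E = E" and fin: "finite T" and ne: "T \<noteq> {}" and ex: "ext E v"
    and fC: "\<And>t. t \<in> T \<Longrightarrow> inC E (f t)" and fle: "\<And>t i. t \<in> T \<Longrightarrow> f t i \<le> v i"
    and cov: "\<And>i. \<exists>t\<in>T. v i \<le> f t i"
  shows "\<exists>t\<in>T. f t = v"
  using fin ne fC fle cov
proof (induction T rule: finite_ne_induct)
  case (singleton x)
  then have "\<And>i. v i \<le> f x i" by blast
  with singleton show ?case by (auto intro!: ext intro: order_antisym)
next
  case (insert x F)
  define w where "w = (\<lambda>i. Max ((\<lambda>t. f t i) ` F))"
  have wge: "f t i \<le> w i" if "t \<in> F" for t i
    unfolding w_def using insert.hyps(1) that by (intro Max_ge) auto
  have wex: "\<exists>t\<in>F. w i = f t i" for i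
  proof -
    have "w i \<in> (\<lambda>t. f t i) ` F" unfolding w_def using insert.hyps(1,2) by (intro Max_in) auto
    then show ?thesis by auto
  qed
  have wC: "inC E w"
    unfolding inC_def
  proof
    fix i show "mv E w i = w i"
    proof (rule mv_eqI)
      fix k
      obtain t where t: "t \<in> F" "w k = f t k" using wex by blast
      have "E i k + f t k \<le> f t i" using inC_le insert.prems(1) t(1) by blast
      then show "E i k + w k \<le> w i" using t wge[OF t(1), of i] by linarith
    next
      obtain t where t: "t \<in> F" "w i = f t i" using wex by blast
      obtain k where "f t i = E i k + f t k" using inC_ex insert.prems(1) t(1) by blast
      then show "\<exists>k. w i \<le> E i k + w k" using t wge[OF t(1), of k] by (intro exI[of _ k]) linarith
    qed
  qed
  have wle: "w i \<le> v i" for i using wex insert.prems(2) by (metis insertCI)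
  have veq: "v = vmax (f x) w"
  proof
    fix i
    obtain t where t: "t \<in> insert x F" "v i \<le> f t i" using insert.prems(3) by blast
    have "v i \<le> max (f x i) (w i)"
      using t wge[of t i] by (cases "t = x") (auto simp: le_max_iff_disj)
    moreover have "max (f x i) (w i) \<le> v i" using insert.prems(2) wle by simp
    ultimately show "v i = vmax (f x) w i" unfolding vmax_def by linarith
  qed
  have "v = f x \<or> v = w" using ex veq wC insert.prems(1) unfolding ext_def by blast
  then show ?case
  proof
    assume "v = f x" then show ?thesis by auto
  next
    assume vw: "v = w"
    have "\<exists>t\<in>F. f t = v"
    proof (rule insert.IH)
      show "\<And>t. t \<in> F \<Longrightarrow> inC E (f t)" using insert.prems(1) by blast
      show "\<And>t i. t \<in> F \<Longrightarrow> f t i \<le> v i" using insert.prems(2) by blast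
      show "\<And>i. \<exists>t\<in>F. v i \<le> f t i" using wex vw by (metis order_refl)
    qed
    then show ?thesis by blast
  qed
qed

locale idemS =
  fixes E :: "('n::finite) tmat" and S :: "'n set"
  assumes idem: "tmult E E = E" and gen: "Gen E S"
    and minS: "\<And>S'. Gen E S' \<Longrightarrow> card S \<le> card S'"
begin

lemma S_ne: "S \<noteq> {}"
  using gen unfolding Gen_def rep_def by blast

lemma remove_contra:
  assumes g: "g \<in> S" and r: "rep E (S - {g}) (col E g)"
  shows False
proof -
  have "Gen E (S - {g})"
    unfolding Gen_def
  proof
    fix k
    show "rep E (S - {g}) (col E k)"
    proof (rule rep_trans)
      show "rep E S (col E k)" using gen unfolding Gen_def by blast
      fix h assume "h \<in> S"
      then show "rep E (S - {g}) (col E h)"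
        using r by (cases "h = g") (auto intro: rep_self)
    qed
  qed
  then have "card S \<le> card (S - {g})" by (rule minS)
  moreover have "card (S - {g}) < card S" using card_Diff1_less[OF finite[of S] g] .
  ultimately show False by linarith
qed

lemma prop_S:
  assumes "j \<in> S" "j' \<in> S" "col E j = shv c (col E j')"
  shows "j = j'"
proof (rule ccontr)
  assume ne: "j \<noteq> j'"
  have "c \<le> mu E j' (col E j)"
    by (rule mu_greatest) (use assms(3) in \<open>simp add: shv_def col_def fun_eq_iff\<close>)
  have "rep E (S - {j}) (col E j)"
    unfolding rep_def
  proof
    fix i
    have "col E j i = c + E i j'" using fun_cong[OF assms(3), of i] by (simp add: shv_def col_def)
    then have "col E j i \<le> mu E j' (col E j) + E i j'" using \<open>c \<le> mu E j' (col E j)\<close> by linarith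
    moreover have "j' \<in> S - {j}" using assms ne by auto
    ultimately show "\<exists>h\<in>S - {j}. col E j i \<le> mu E h (col E j) + E i h" by blast
  qed
  then show False using remove_contra assms(1) by blast
qed

lemma shv_col_inj:
  assumes "j \<in> S" "k \<in> S" "shv c (col E j) = shv c' (col E k)"
  shows "j = k \<and> c = c'"
proof -
  have "col E j = shv (c' - c) (col E k)"
  proof
    fix i
    have "c + E i j = c' + E i k" using fun_cong[OF assms(3), of i] by (simp add: shv_def col_def)
    then show "col E j i = shv (c' - c) (col E k) i" by (simp add: shv_def col_def)
  qed
  then have jk: "j = k" using prop_S assms by blast
  have "c + E i j = c' + E i k" for i using fun_cong[OF assms(3), of i] by (simp add: shv_def col_def)
  then show ?thesis using jk by auto
qed

lemma ext_S:
  assumes g: "g \<in> S" shows "ext E (col E g)"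
  unfolding ext_def
proof (intro conjI allI impI)
  show "inC E (col E g)" using inC_col idem by blast
  fix u w assume uC: "inC E u" and wC: "inC E w" and eq: "col E g = vmax u w"
  show "col E g = u \<or> col E g = w"
  proof (rule ccontr)
    assume nn: "\<not> (col E g = u \<or> col E g = w)"
    have key: "\<exists>h\<in>S - {g}. E i g \<le> mu E h (col E g) + E i h"
      if xC: "inC E x" and xle: "\<And>i. x i \<le> E i g" and xne: "x \<noteq> col E g" and xi: "x i = E i g" for x i
    proof -
      have "mu E g x < 0"
      proof (rule ccontr)
        assume "\<not> mu E g x < 0"
        then have "E i' g \<le> x i'" for i' using mu_le[of E g x i'] by linarith
        then have "x = col E g" using xle by (auto simp: fun_eq_iff col_def intro: order_antisym)
        then show False using xne by blast
      qed
      obtain h where h: "h \<in> S" "x i \<le> mu E h x + E i h" using rep_inC[OF gen xC] unfolding rep_def by blast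
      have hg: "h \<noteq> g" using h \<open>mu E g x < 0\<close> xi by auto
      have "mu E h x \<le> mu E h (col E g)" by (rule mu_mono) (simp add: col_def xle)
      then show ?thesis using h hg xi by (intro bexI[of _ h]) auto
    qed
    have ule: "u i \<le> E i g" and wle: "w i \<le> E i g" for i
      using eq by (auto simp: fun_eq_iff vmax_def col_def)
    have "rep E (S - {g}) (col E g)"
      unfolding rep_def
    proof
      fix i
      have "E i g = u i \<or> E i g = w i" using eq by (auto simp: fun_eq_iff vmax_def col_def max_def)
      then have "\<exists>h\<in>S - {g}. E i g \<le> mu E h (col E g) + E i h"
      proof
        assume "E i g = u i"
        then show ?thesis using key[OF uC ule, of i] nn by auto
      next
        assume "E i g = w i"
        then show ?thesis using key[OF wC wle, of i] nn by auto
      qed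
      then show "\<exists>h\<in>S - {g}. col E g i \<le> mu E h (col E g) + E i h" by (simp add: col_def)
    qed
    then show False using remove_contra g by blast
  qed
qed

lemma ext_rep:
  assumes ex: "ext E v" shows "\<exists>h\<in>S. v = shv (mu E h v) (col E h)"
proof -
  have vC: "inC E v" using ex unfolding ext_def by blast
  have "\<exists>h\<in>S. shv (mu E h v) (col E h) = v"
  proof (rule ext_split[OF idem _ S_ne ex])
    show "finite S" by simp
    show "\<And>h. h \<in> S \<Longrightarrow> inC E (shv (mu E h v) (col E h))" by (intro inC_shv inC_col idem)
    show "\<And>h i. h \<in> S \<Longrightarrow> shv (mu E h v) (col E h) i \<le> v i" by (simp add: shv_def col_def mu_le)
    show "\<And>i. \<exists>h\<in>S. v i \<le> shv (mu E h v) (col E h) i"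
      using rep_inC[OF gen vC] by (simp add: rep_def shv_def col_def)
  qed
  then show ?thesis by metis
qed

end


lemma shv_shv: "shv c (shv d v) = shv (d + c) v"
  by (simp add: shv_def fun_eq_iff algebra_simps)

locale tgrp = idemS E S for E :: "('n::finite) tmat" and S +
  fixes H :: "'n tmat set"
  assumes closed: "\<And>x y. x \<in> H \<Longrightarrow> y \<in> H \<Longrightarrow> tmult x y \<in> H"
    and E_in: "E \<in> H"
    and identl: "\<And>x. x \<in> H \<Longrightarrow> tmult E x = x"
    and identr: "\<And>x. x \<in> H \<Longrightarrow> tmult x E = x"
    and invs: "\<And>x. x \<in> H \<Longrightarrow> \<exists>y\<in>H. tmult x y = E \<and> tmult y x = E"
    and shift_cl: "\<And>A c. A \<in> H \<Longrightarrow> shm c A \<in> H"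
begin

lemma inC_act: "A \<in> H \<Longrightarrow> inC E (mv A v)"
  unfolding inC_def by (metis mv_assoc identl)

lemma act_ext:
  assumes A: "A \<in> H" and ex: "ext E v" shows "ext E (mv A v)"
  unfolding ext_def
proof (intro conjI allI impI)
  show "inC E (mv A v)" using inC_act A by blast
  obtain B where B: "B \<in> H" "tmult A B = E" "tmult B A = E" using invs A by blast
  have vC: "inC E v" using ex unfolding ext_def by blast
  fix u w assume uC: "inC E u" and wC: "inC E w" and eq: "mv A v = vmax u w"
  have "v = mv B (mv A v)" using vC B by (metis inC_def mv_assoc)
  also have "\<dots> = vmax (mv B u) (mv B w)" by (simp add: eq mv_vmax)
  finally have "v = mv B u \<or> v = mv B w" using ex inC_act[OF B(1)] unfolding ext_def by blast
  then show "mv A v = u \<or> mv A v = w"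
  proof
    assume "v = mv B u"
    then have "mv A v = mv E u" by (simp add: B(2) flip: mv_assoc)
    then show ?thesis using uC by (simp add: inC_def)
  next
    assume "v = mv B w"
    then have "mv A v = mv E w" by (simp add: B(2) flip: mv_assoc)
    then show ?thesis using wC by (simp add: inC_def)
  qed
qed

lemma act_col: "A \<in> H \<Longrightarrow> j \<in> S \<Longrightarrow> \<exists>k. k \<in> S \<and> (\<exists>c. mv A (col E j) = shv c (col E k))"
  using ext_rep[OF act_ext[OF _ ext_S]] by blast

definition sg :: "'n tmat \<Rightarrow> 'n \<Rightarrow> 'n" where
  "sg A j = (if j \<in> S then (SOME k. k \<in> S \<and> (\<exists>c. mv A (col E j) = shv c (col E k))) else j)"

definition lm :: "'n tmat \<Rightarrow> 'n \<Rightarrow> real" where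
  "lm A j = (SOME c. mv A (col E j) = shv c (col E (sg A j)))"

lemma sg_lm:
  assumes "A \<in> H" "j \<in> S"
  shows "sg A j \<in> S \<and> mv A (col E j) = shv (lm A j) (col E (sg A j))"
proof -
  have 1: "sg A j \<in> S \<and> (\<exists>c. mv A (col E j) = shv c (col E (sg A j)))"
    unfolding sg_def using assms(2) someI_ex[OF act_col[OF assms]] by simp
  then have "mv A (col E j) = shv (lm A j) (col E (sg A j))"
    unfolding lm_def by (metis (mono_tags, lifting) someI_ex)
  with 1 show ?thesis by blast
qed

lemma sg_lm_uniq:
  assumes "A \<in> H" "j \<in> S" "k \<in> S" "mv A (col E j) = shv c (col E k)"
  shows "sg A j = k \<and> lm A j = c"
  using sg_lm[OF assms(1,2)] assms(3,4) shv_col_inj by metis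

lemma sg_out: "j \<notin> S \<Longrightarrow> sg A j = j"
  by (simp add: sg_def)

lemma sg_E: "j \<in> S \<Longrightarrow> sg E j = j \<and> lm E j = 0"
  by (rule sg_lm_uniq[OF E_in]) (auto simp: mv_col_idem[OF idem] shv_def)

lemma sg_E_id: "sg E = id"
  using sg_E sg_out by (auto simp: fun_eq_iff)

lemma sg_mult:
  assumes A: "A \<in> H" and A': "A' \<in> H" and j: "j \<in> S"
  shows "sg (tmult A A') j = sg A (sg A' j) \<and> lm (tmult A A') j = lm A' j + lm A (sg A' j)"
proof (rule sg_lm_uniq[OF closed[OF A A'] j])
  have 1: "sg A' j \<in> S" "mv A' (col E j) = shv (lm A' j) (col E (sg A' j))" using sg_lm[OF A' j] by auto
  have 2: "sg A (sg A' j) \<in> S" "mv A (col E (sg A' j)) = shv (lm A (sg A' j)) (col E (sg A (sg A' j)))"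
    using sg_lm[OF A 1(1)] by auto
  show "sg A (sg A' j) \<in> S" by (rule 2(1))
  show "mv (tmult A A') (col E j) = shv (lm A' j + lm A (sg A' j)) (col E (sg A (sg A' j)))"
    by (simp add: mv_assoc 1(2) mv_shv 2(2) shv_shv add.commute)
qed

lemma sg_comp: "A \<in> H \<Longrightarrow> A' \<in> H \<Longrightarrow> sg (tmult A A') = sg A \<circ> sg A'"
  apply (rule ext)
  subgoal for x by (cases "x \<in> S") (simp_all add: sg_mult sg_out)
  done

lemma sg_shm:
  assumes A: "A \<in> H" and j: "j \<in> S"
  shows "sg (shm c A) j = sg A j \<and> lm (shm c A) j = c + lm A j"
proof (rule sg_lm_uniq[OF shift_cl[OF A] j])
  show "sg A j \<in> S" using sg_lm[OF A j] by auto
  show "mv (shm c A) (col E j) = shv (c + lm A j) (col E (sg A j))"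
    using sg_lm[OF A j] by (simp add: mv_shm shv_shv add.commute)
qed

lemma sg_shm_eq: "A \<in> H \<Longrightarrow> sg (shm c A) = sg A"
  apply (rule ext)
  subgoal for x by (cases "x \<in> S") (simp_all add: sg_shm sg_out)
  done

lemma sg_bij_betw:
  assumes A: "A \<in> H" shows "bij_betw (sg A) S S"
proof -
  obtain B where B: "B \<in> H" "tmult A B = E" "tmult B A = E" using invs A by blast
  show ?thesis
  proof (rule bij_betw_byWitness[where f'="sg B"])
    show "\<forall>a\<in>S. sg B (sg A a) = a" using sg_mult[OF B(1) A] B(3) sg_E by auto
    show "\<forall>a\<in>S. sg A (sg B a) = a" using sg_mult[OF A B(1)] B(2) sg_E by auto
    show "sg A ` S \<subseteq> S" using sg_lm[OF A] by auto
    show "sg B ` S \<subseteq> S" using sg_lm[OF B(1)] by auto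
  qed
qed

lemma sg_bij:
  assumes A: "A \<in> H" shows "bij (sg A)"
proof -
  obtain B where B: "B \<in> H" "tmult A B = E" "tmult B A = E" using invs A by blast
  have "sg A \<circ> sg B = id" "sg B \<circ> sg A = id" using sg_comp A B sg_E_id by metis+
  then show ?thesis using o_bij by blast
qed

definition phi :: "'n tmat \<Rightarrow> real" where
  "phi A = (\<Sum>j\<in>S. lm A j) / card S"

lemma cardS: "card S > 0"
  using S_ne by (simp add: card_gt_0_iff)

lemma phi_mult:
  assumes A: "A \<in> H" and A': "A' \<in> H"
  shows "phi (tmult A A') = phi A + phi A'"
proof -
  have "(\<Sum>j\<in>S. lm (tmult A A') j) = (\<Sum>j\<in>S. lm A' j) + (\<Sum>j\<in>S. lm A (sg A' j))"
    using sg_mult[OF A A'] by (simp add: sum.distrib)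
  also have "(\<Sum>j\<in>S. lm A (sg A' j)) = (\<Sum>j\<in>S. lm A j)"
    using sum.reindex_bij_betw[OF sg_bij_betw[OF A'], of "lm A"] by simp
  finally show ?thesis unfolding phi_def by (simp add: add_divide_distrib)
qed

lemma phi_shm:
  assumes A: "A \<in> H" shows "phi (shm c A) = c + phi A"
proof -
  have "(\<Sum>j\<in>S. lm (shm c A) j) = real (card S) * c + (\<Sum>j\<in>S. lm A j)"
    using sg_shm[OF A] by (simp add: sum.distrib)
  then show ?thesis unfolding phi_def using cardS S_ne by (simp add: add_divide_distrib)
qed

lemma phi_E: "phi E = 0"
  unfolding phi_def using sg_E by simp

lemma lm_le:
  assumes M: "M \<in> H" and fxd: "\<And>j. j \<in> S \<Longrightarrow> sg M j = j" and j: "j \<in> S" and k: "k \<in> S"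
  shows "lm M k \<le> lm M j"
proof -
  define m where "m = mu E k (col E j)"
  have ej: "mv M (col E j) = shv (lm M j) (col E j)" using sg_lm[OF M j] fxd[OF j] by simp
  have ek: "mv M (col E k) = shv (lm M k) (col E k)" using sg_lm[OF M k] fxd[OF k] by simp
  have "m + lm M k - lm M j \<le> m" unfolding m_def
  proof (rule mu_greatest)
    fix i
    have "mv M (shv m (col E k)) i \<le> mv M (col E j) i"
      by (rule mv_mono) (use mu_le[of E k "col E j"] in \<open>simp add: shv_def col_def m_def\<close>)
    moreover have "mv M (shv m (col E k)) = shv (lm M k + m) (col E k)"
      by (simp only: mv_shv ek shv_shv)
    ultimately show "mu E k (col E j) + lm M k - lm M j + E i k \<le> col E j i"
      using ej by (simp add: shv_def col_def m_def)
  qed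
  then show ?thesis by linarith
qed

lemma fixes_all:
  assumes M: "M \<in> H" and fxd: "\<And>j. j \<in> S \<Longrightarrow> sg M j = j" and ph: "phi M = 0" and j: "j \<in> S"
  shows "mv M (col E j) = col E j"
proof -
  have eq: "lm M k = lm M j" if "k \<in> S" for k using lm_le[OF M fxd] that j by (meson order_antisym)
  have "(\<Sum>k\<in>S. lm M k) = real (card S) * lm M j" using eq by simp
  then have "lm M j = 0" using ph cardS S_ne unfolding phi_def by simp
  then show ?thesis using sg_lm[OF M j] fxd[OF j] by (simp add: shv_def)
qed

lemma fix_ge:
  assumes M: "M \<in> H" and fx: "\<And>j. j \<in> S \<Longrightarrow> mv M (col E j) = col E j" and vC: "inC E v"
  shows "v i \<le> mv M v i"
proof -
  obtain h where h: "h \<in> S" "v i \<le> mu E h v + E i h" using rep_inC[OF gen vC] unfolding rep_def by blast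
  have "mv M (shv (mu E h v) (col E h)) i \<le> mv M v i"
    by (rule mv_mono) (simp add: shv_def col_def mu_le)
  moreover have "mv M (shv (mu E h v) (col E h)) = shv (mu E h v) (col E h)"
    by (simp only: mv_shv fx[OF h(1)])
  ultimately show ?thesis using h by (simp add: shv_def col_def)
qed

lemma inj_main:
  assumes A: "A \<in> H" and A': "A' \<in> H" and s: "sg A = sg A'" and p: "phi A = phi A'"
  shows "A = A'"
proof -
  obtain B where B: "B \<in> H" "tmult A B = E" "tmult B A = E" using invs A by blast
  obtain B' where B': "B' \<in> H" "tmult A' B' = E" "tmult B' A' = E" using invs A' by blast
  define M where "M = tmult A' B"
  define N where "N = tmult A B'"
  have MH: "M \<in> H" and NH: "N \<in> H" using closed A A' B B' by (auto simp: M_def N_def)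
  have sM: "sg M j = j" if "j \<in> S" for j
    using sg_mult[OF A' B(1) that] sg_mult[OF A B(1) that] B(2) sg_E[OF that] s by (simp add: M_def)
  have sN: "sg N j = j" if "j \<in> S" for j
    using sg_mult[OF A B'(1) that] sg_mult[OF A' B'(1) that] B'(2) sg_E[OF that] s by (simp add: N_def)
  have pM: "phi M = 0" using phi_mult[OF A' B(1)] phi_mult[OF A B(1)] B(2) phi_E p by (simp add: M_def)
  have pN: "phi N = 0" using phi_mult[OF A B'(1)] phi_mult[OF A' B'(1)] B'(2) phi_E p by (simp add: N_def)
  have fM: "\<And>j. j \<in> S \<Longrightarrow> mv M (col E j) = col E j" using fixes_all[OF MH sM pM] by blast
  have fN: "\<And>j. j \<in> S \<Longrightarrow> mv N (col E j) = col E j" using fixes_all[OF NH sN pN] by blast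
  have NM: "tmult N M = E"
  proof -
    have "tmult N M = tmult A (tmult (tmult B' A') B)" by (simp add: M_def N_def tmult_assoc)
    also have "\<dots> = E" using B'(3) identl[OF B(1)] B(2) by simp
    finally show ?thesis .
  qed
  have Mv: "mv M v = v" if vC: "inC E v" for v
  proof
    fix i
    have "inC E (mv M v)" by (rule inC_act[OF MH])
    then have "mv M v i \<le> mv N (mv M v) i" using fix_ge[OF NH fN] by blast
    also have "\<dots> = v i" using vC by (simp add: NM inC_def flip: mv_assoc)
    finally show "mv M v i = v i" using fix_ge[OF MH fM vC, of i] by linarith
  qed
  have "M = E"
  proof (intro ext)
    fix i k
    have "M i k = tmult M E i k" using identr[OF MH] by simp
    also have "\<dots> = mv M (col E k) i" by (simp add: tmult_mv)
    also have "\<dots> = E i k" using Mv[OF inC_col[OF idem]] by (simp add: col_def)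
    finally show "M i k = E i k" .
  qed
  have "A' = tmult A' (tmult B A)" using identr[OF A'] B(3) by simp
  also have "\<dots> = tmult M A" by (simp add: M_def tmult_assoc)
  also have "\<dots> = A" using \<open>M = E\<close> identl[OF A] by simp
  finally show ?thesis by simp
qed


lemma sg_Bij: "A \<in> H \<Longrightarrow> sg A \<in> carrier (BijGroup UNIV)"
  using sg_bij by (simp add: BijGroup_def Bij_def)

lemma bij_mult: "f \<in> carrier (BijGroup UNIV) \<Longrightarrow> g \<in> carrier (BijGroup UNIV) \<Longrightarrow>
    f \<otimes>\<^bsub>BijGroup UNIV\<^esub> g = f \<circ> g"
  by (simp add: BijGroup_def compose_def fun_eq_iff)

lemma bij_one: "\<one>\<^bsub>BijGroup UNIV\<^esub> = sg E"
  by (simp add: BijGroup_def sg_E_id fun_eq_iff)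

lemma main_iso:
  "\<exists>\<Sigma>. subgroup \<Sigma> (BijGroup (UNIV :: 'n set)) \<and>
           sg_group tmult H \<cong> real_add_group \<times>\<times> ((BijGroup (UNIV :: 'n set))\<lparr>carrier := \<Sigma>\<rparr>)"
proof (intro exI conjI)
  show "subgroup (sg ` H) (BijGroup UNIV)"
  proof (rule subgroup.intro)
    show "sg ` H \<subseteq> carrier (BijGroup UNIV)" using sg_Bij by blast
    fix x y assume "x \<in> sg ` H" "y \<in> sg ` H"
    then obtain A A' where AA: "A \<in> H" "A' \<in> H" "x = sg A" "y = sg A'" by blast
    then have "x \<otimes>\<^bsub>BijGroup UNIV\<^esub> y = sg (tmult A A')" by (simp add: bij_mult sg_Bij sg_comp)
    then show "x \<otimes>\<^bsub>BijGroup UNIV\<^esub> y \<in> sg ` H" using closed AA by blast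
  next
    show "\<one>\<^bsub>BijGroup UNIV\<^esub> \<in> sg ` H" using bij_one E_in by blast
  next
    fix x assume "x \<in> sg ` H"
    then obtain A where A: "A \<in> H" "x = sg A" by blast
    obtain B where B: "B \<in> H" "tmult A B = E" "tmult B A = E" using invs A(1) by blast
    have "inv\<^bsub>BijGroup UNIV\<^esub> (sg A) = sg B"
    proof (rule group.inv_equality[OF group_BijGroup])
      show "sg B \<otimes>\<^bsub>BijGroup UNIV\<^esub> sg A = \<one>\<^bsub>BijGroup UNIV\<^esub>"
        using A B by (simp add: bij_mult sg_Bij bij_one flip: sg_comp)
      show "sg A \<in> carrier (BijGroup UNIV)" "sg B \<in> carrier (BijGroup UNIV)" using sg_Bij A B by auto
    qed
    then show "inv\<^bsub>BijGroup UNIV\<^esub> x \<in> sg ` H" using A B by auto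
  qed
  show "sg_group tmult H \<cong> real_add_group \<times>\<times> (BijGroup UNIV)\<lparr>carrier := sg ` H\<rparr>"
  proof (rule is_isoI[of "\<lambda>A. (phi A, sg A)"])
    show "(\<lambda>A. (phi A, sg A)) \<in> iso (sg_group tmult H) (real_add_group \<times>\<times> (BijGroup UNIV)\<lparr>carrier := sg ` H\<rparr>)"
      unfolding iso_def hom_def
    proof (intro CollectI conjI)
      show "(\<lambda>A. (phi A, sg A)) \<in> carrier (sg_group tmult H) \<rightarrow> carrier (real_add_group \<times>\<times> (BijGroup UNIV)\<lparr>carrier := sg ` H\<rparr>)"
        by (auto simp: sg_group_def DirProd_def real_add_group_def)
      show "\<forall>x\<in>carrier (sg_group tmult H). \<forall>y\<in>carrier (sg_group tmult H).
         (phi (x \<otimes>\<^bsub>sg_group tmult H\<^esub> y), sg (x \<otimes>\<^bsub>sg_group tmult H\<^esub> y)) =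
         (phi x, sg x) \<otimes>\<^bsub>real_add_group \<times>\<times> (BijGroup UNIV)\<lparr>carrier := sg ` H\<rparr>\<^esub> (phi y, sg y)"
      proof (intro ballI)
        fix x y assume "x \<in> carrier (sg_group tmult H)" "y \<in> carrier (sg_group tmult H)"
        then have xy: "x \<in> H" "y \<in> H" by (auto simp: sg_group_def)
        have "sg x \<otimes>\<^bsub>BijGroup UNIV\<^esub> sg y = sg (tmult x y)" using xy by (simp add: bij_mult sg_Bij sg_comp)
        then show "(phi (x \<otimes>\<^bsub>sg_group tmult H\<^esub> y), sg (x \<otimes>\<^bsub>sg_group tmult H\<^esub> y)) =
         (phi x, sg x) \<otimes>\<^bsub>real_add_group \<times>\<times> (BijGroup UNIV)\<lparr>carrier := sg ` H\<rparr>\<^esub> (phi y, sg y)"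
          using xy by (simp add: sg_group_def DirProd_def real_add_group_def phi_mult)
      qed
      show "bij_betw (\<lambda>A. (phi A, sg A)) (carrier (sg_group tmult H))
          (carrier (real_add_group \<times>\<times> (BijGroup UNIV)\<lparr>carrier := sg ` H\<rparr>))"
        unfolding bij_betw_def
      proof
        show "inj_on (\<lambda>A. (phi A, sg A)) (carrier (sg_group tmult H))"
          by (rule inj_onI) (auto simp: sg_group_def intro: inj_main)
        show "(\<lambda>A. (phi A, sg A)) ` carrier (sg_group tmult H) =
            carrier (real_add_group \<times>\<times> (BijGroup UNIV)\<lparr>carrier := sg ` H\<rparr>)"
        proof
          show "(\<lambda>A. (phi A, sg A)) ` carrier (sg_group tmult H) \<subseteq>
            carrier (real_add_group \<times>\<times> (BijGroup UNIV)\<lparr>carrier := sg ` H\<rparr>)"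
            by (auto simp: sg_group_def DirProd_def real_add_group_def)
          show "carrier (real_add_group \<times>\<times> (BijGroup UNIV)\<lparr>carrier := sg ` H\<rparr>) \<subseteq>
              (\<lambda>A. (phi A, sg A)) ` carrier (sg_group tmult H)"
          proof
            fix p assume "p \<in> carrier (real_add_group \<times>\<times> (BijGroup UNIV)\<lparr>carrier := sg ` H\<rparr>)"
            then obtain c A where p: "p = (c, sg A)" "A \<in> H" by (auto simp: DirProd_def real_add_group_def)
            have "shm (c - phi A) A \<in> H" using shift_cl p(2) by blast
            moreover have "(phi (shm (c - phi A) A), sg (shm (c - phi A) A)) = p"
              using p by (simp add: phi_shm sg_shm_eq)
            ultimately show "p \<in> (\<lambda>A. (phi A, sg A)) ` carrier (sg_group tmult H)"
              by (force simp: sg_group_def)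
          qed
        qed
      qed
    qed
  qed
qed

end

theorem corollary7p10:
  fixes H :: "('n::finite) tmat set"
  assumes "sg_maximal_subgroup tmult H"
  shows "\<exists>\<Sigma>. subgroup \<Sigma> (BijGroup (UNIV :: 'n set)) \<and>
           sg_group tmult H \<cong> real_add_group \<times>\<times> ((BijGroup (UNIV :: 'n set))\<lparr>carrier := \<Sigma>\<rparr>)"
proof -
  have sub: "sg_subgroup tmult H" and maxi: "\<And>K. sg_subgroup tmult K \<Longrightarrow> H \<subseteq> K \<Longrightarrow> K = H"
    using assms unfolding sg_maximal_subgroup_def by blast+
  obtain E where cl: "\<And>x y. x \<in> H \<Longrightarrow> y \<in> H \<Longrightarrow> tmult x y \<in> H" and EH: "E \<in> H"
    and id: "\<And>x. x \<in> H \<Longrightarrow> tmult E x = x \<and> tmult x E = x"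
    and iv: "\<And>x. x \<in> H \<Longrightarrow> \<exists>y\<in>H. tmult x y = E \<and> tmult y x = E"
    using sub unfolding sg_subgroup_def by metis
  define K where "K = {shm c A | c A. A \<in> H}"
  have HK: "H \<subseteq> K" unfolding K_def using shm_0 by (metis (mono_tags, lifting) mem_Collect_eq subsetI)
  have "sg_subgroup tmult K"
    unfolding sg_subgroup_def
  proof (intro conjI)
    show "\<forall>x\<in>K. \<forall>y\<in>K. tmult x y \<in> K"
    proof (intro ballI)
      fix x y assume "x \<in> K" "y \<in> K"
      then obtain c d A B where "x = shm c A" "y = shm d B" "A \<in> H" "B \<in> H" unfolding K_def by blast
      then show "tmult x y \<in> K" unfolding K_def
        using cl by (auto simp: tmult_shm_left tmult_shm_right shm_shm)
    qed
    have EK: "E \<in> K" using HK EH by blast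
    have idK: "\<forall>x\<in>K. tmult E x = x \<and> tmult x E = x"
    proof
      fix x assume "x \<in> K"
      then obtain c A where x: "x = shm c A" "A \<in> H" unfolding K_def by blast
      then show "tmult E x = x \<and> tmult x E = x" using id by (simp add: tmult_shm_left tmult_shm_right)
    qed
    have ivK: "\<forall>x\<in>K. \<exists>y\<in>K. tmult x y = E \<and> tmult y x = E"
    proof
      fix x assume "x \<in> K"
      then obtain c A where x: "x = shm c A" "A \<in> H" unfolding K_def by blast
      obtain B where B: "B \<in> H" "tmult A B = E" "tmult B A = E" using iv x(2) by blast
      have "shm (- c) B \<in> K" unfolding K_def using B by blast
      moreover have "tmult x (shm (- c) B) = E \<and> tmult (shm (- c) B) x = E"
        using B x by (simp add: tmult_shm_left tmult_shm_right shm_shm shm_0)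
      ultimately show "\<exists>y\<in>K. tmult x y = E \<and> tmult y x = E" by blast
    qed
    show "\<exists>e\<in>K. (\<forall>x\<in>K. tmult e x = x \<and> tmult x e = x) \<and> (\<forall>x\<in>K. \<exists>y\<in>K. tmult x y = e \<and> tmult y x = e)"
      using EK idK ivK by blast
  qed
  then have KH: "K = H" using maxi HK by blast
  have shift: "\<And>A c. A \<in> H \<Longrightarrow> shm c A \<in> H" using KH unfolding K_def by blast
  have idem: "tmult E E = E" using id EH by blast
  obtain S where S: "Gen E S" "\<forall>S'. Gen E S' \<longrightarrow> card S \<le> card S'"
    using ex_has_least_nat[of "Gen E" UNIV card] Gen_UNIV[OF idem] by blast
  interpret tgrp E S H
    by (unfold_locales) (use idem S cl EH id iv shift in auto)
  show ?thesis by (rule main_iso)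
qed

end
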